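(* Let $D \geq 1$, let $f \colon \mathbb{Z}^D \to \mathbb{R}$ be a discrete signal in $l_1$, let $T \colon \mathbb{Z}^D \times \mathbb{R}_+ \to \mathbb{R}$ be a discrete pre-scale-space family of kernels, and let $L \colon \mathbb{Z}^D \times \mathbb{R}_+ \to \mathbb{R}$ be the discrete pre-scale-space representation of $f$ generated by $T$. Then $L$ satisfies the differential equation $$\partial_s L = \mathcal{A} L$$ for some linear and shift-invariant operator $\mathcal{A}$.
   Context: A one-parameter family of kernels $T \colon \mathbb{Z}^D \times \mathbb{R}_+ \to \mathbb{R}$ is a discrete pre-scale-space family of kernels if (i) $T(\cdot;0) = \delta(\cdot)$ (the discrete delta function), (ii) the semi-group property $T(\cdot;s_1) * T(\cdot;s_2) = T(\cdot;s_1+s_2)$ holds for all $s_1,s_2 \ge 0$ (where $*$ is discrete convolution over $\mathbb{Z}^D$), and (iii) $\| T(\cdot;s) - \delta(\cdot)\|_1 \to 0$ as $s \downarrow 0$. Given such $T$ and a signal $f\colon \mathbb{Z}^D \to \mathbb{R}$, the discrete pre-scale-space representation of $f$ generated by $T$ is $L(x;s) = \sum_{\xi \in \mathbb{Z}^D} T(\xi;s)\, f(x-\xi)$. Here $\partial_s L$ denotes the derivative of $L$ with respect to the scale parameter $s$. *)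

theory Defs
  imports "HOL-Analysis.Analysis"
begin

text \<open>Discrete signals on Z^D are functions on the lattice int^'d ('d a finite
index type of cardinality D >= 1).\<close>

type_synonym 'd dsignal = "int ^ 'd \<Rightarrow> real"

definition ddelta :: "'d::finite dsignal" where
  "ddelta x = (if x = 0 then 1 else 0)"

definition in_l1 :: "'d::finite dsignal \<Rightarrow> bool" where
  "in_l1 u \<longleftrightarrow> (\<lambda>x. \<bar>u x\<bar>) summable_on UNIV"

definition l1_norm :: "'d::finite dsignal \<Rightarrow> real" where
  "l1_norm u = (\<Sum>\<^sub>\<infinity>x. \<bar>u x\<bar>)"

definition dconv :: "'d::finite dsignal \<Rightarrow> 'd dsignal \<Rightarrow> 'd dsignal" where
  "dconv g h = (\<lambda>x. \<Sum>\<^sub>\<infinity>\<xi>. g \<xi> * h (x - \<xi>))"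

definition pre_scale_space_kernel :: "(int ^ 'd::finite \<Rightarrow> real \<Rightarrow> real) \<Rightarrow> bool" where
  "pre_scale_space_kernel T \<longleftrightarrow>
     (\<lambda>x. T x 0) = ddelta \<and>
     (\<forall>s1 s2. s1 \<ge> 0 \<longrightarrow> s2 \<ge> 0 \<longrightarrow>
        dconv (\<lambda>x. T x s1) (\<lambda>x. T x s2) = (\<lambda>x. T x (s1 + s2))) \<and>
     (\<forall>\<^sub>F s in at_right 0. in_l1 (\<lambda>x. T x s - ddelta x)) \<and>
     ((\<lambda>s. l1_norm (\<lambda>x. T x s - ddelta x)) \<longlongrightarrow> 0) (at_right 0)"

definition pre_scale_space_rep ::
    "(int ^ 'd::finite \<Rightarrow> real \<Rightarrow> real) \<Rightarrow> 'd dsignal \<Rightarrow> int ^ 'd \<Rightarrow> real \<Rightarrow> real" where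
  "pre_scale_space_rep T f x s = (\<Sum>\<^sub>\<infinity>\<xi>. T \<xi> s * f (x - \<xi>))"

definition linear_on_l1 :: "('d::finite dsignal \<Rightarrow> 'd dsignal) \<Rightarrow> bool" where
  "linear_on_l1 A \<longleftrightarrow> (\<forall>u v a b. in_l1 u \<longrightarrow> in_l1 v \<longrightarrow>
      A (\<lambda>x. a * u x + b * v x) = (\<lambda>x. a * A u x + b * A v x))"

definition shift_invariant_on_l1 :: "('d::finite dsignal \<Rightarrow> 'd dsignal) \<Rightarrow> bool" where
  "shift_invariant_on_l1 A \<longleftrightarrow> (\<forall>u y. in_l1 u \<longrightarrow>
      A (\<lambda>x. u (x - y)) = (\<lambda>x. A u (x - y)))"

end

theory Submission
  imports Defs
begin


lemma sg_power:
  fixes P :: "real \<Rightarrow> 'a::real_normed_algebra_1"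
  assumes P0: "P 0 = 1" and Padd: "\<And>s t. 0 \<le> s \<Longrightarrow> 0 \<le> t \<Longrightarrow> P (s + t) = P s * P t"
    and h: "0 \<le> h"
  shows "P (real n * h) = P h ^ n"
proof (induction n)
  case 0 then show ?case by (simp add: P0)
next
  case (Suc n)
  have "P (real (Suc n) * h) = P (h + real n * h)" by (simp add: algebra_simps)
  also have "\<dots> = P h * P (real n * h)" using h by (simp add: Padd)
  finally show ?case using Suc by simp
qed

lemma sg_bound:
  fixes P :: "real \<Rightarrow> 'a::real_normed_algebra_1"
  assumes P0: "P 0 = 1" and Padd: "\<And>s t. 0 \<le> s \<Longrightarrow> 0 \<le> t \<Longrightarrow> P (s + t) = P s * P t"
    and e: "e > 0" and small: "\<And>h. 0 \<le> h \<Longrightarrow> h \<le> e \<Longrightarrow> norm (P h) \<le> 2"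
  shows "\<exists>M. \<forall>r. 0 \<le> r \<and> r \<le> b \<longrightarrow> norm (P r) \<le> M"
proof -
  define n where "n = nat \<lceil>b / e\<rceil> + 1"
  have npos: "real n > 0" by (simp add: n_def)
  have nge: "b / e \<le> real n" unfolding n_def
    using real_nat_ceiling_ge[of "b/e"] by simp
  show ?thesis
  proof (intro exI allI impI)
    fix r assume r: "0 \<le> r \<and> r \<le> b"
    define h where "h = r / real n"
    have h0: "0 \<le> h" using r npos by (simp add: h_def)
    have "b \<le> real n * e" using nge e by (simp add: field_simps)
    then have he: "h \<le> e" using r npos unfolding h_def by (simp add: field_simps)
    have "P r = P (real n * h)" using npos by (simp add: h_def)
    also have "\<dots> = P h ^ n" using sg_power[OF P0 Padd h0] by simp
    finally have "norm (P r) \<le> norm (P h) ^ n" by (simp add: norm_power_ineq)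
    also have "\<dots> \<le> 2 ^ n" by (rule power_mono[OF small[OF h0 he]]) simp
    finally show "norm (P r) \<le> 2 ^ n" .
  qed
qed


lemma sg_cont:
  fixes P :: "real \<Rightarrow> 'a::real_normed_algebra_1"
  assumes P0: "P 0 = 1" and Padd: "\<And>s t. 0 \<le> s \<Longrightarrow> 0 \<le> t \<Longrightarrow> P (s + t) = P s * P t"
    and Plim: "(P \<longlongrightarrow> 1) (at_right 0)"
  shows "continuous_on {0..} P"
proof -
  have ev: "\<forall>\<^sub>F h in at_right 0. dist (P h) 1 < c" if "c > 0" for c
    using Plim that by (simp add: tendsto_iff)
  obtain b1 where b1: "b1 > 0" "\<And>h. 0 < h \<Longrightarrow> h < b1 \<Longrightarrow> dist (P h) 1 < 1"
    using ev[of 1] unfolding eventually_at_right_field by auto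
  define e where "e = b1 / 2"
  have e: "e > 0" using b1 by (simp add: e_def)
  have small: "norm (P h) \<le> 2" if "0 \<le> h" "h \<le> e" for h
  proof (cases "h = 0")
    case True then show ?thesis by (simp add: P0)
  next
    case False
    then have "dist (P h) 1 < 1" using b1 that by (auto simp: e_def)
    then have "norm (P h - 1) < 1" by (simp add: dist_norm)
    then have "norm (P h) < 2" using norm_triangle_ineq2[of "P h" 1] by simp
    then show ?thesis by simp
  qed
  show ?thesis
    unfolding continuous_on_iff
  proof (intro ballI allI impI)
    fix s e' :: real assume s: "s \<in> {0..}" and e': "e' > 0"
    obtain M where M: "\<And>r. 0 \<le> r \<Longrightarrow> r \<le> s + 1 \<Longrightarrow> norm (P r) \<le> M"
      using sg_bound[OF P0 Padd e small, of "s+1"] by blast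
    define M' where "M' = max M 1"
    have M'pos: "M' > 0" by (simp add: M'_def)
    have M': "norm (P r) \<le> M'" if "0 \<le> r" "r \<le> s + 1" for r
      using M[OF that] by (simp add: M'_def)
    obtain b where b: "b > 0" "\<And>h. 0 < h \<Longrightarrow> h < b \<Longrightarrow> dist (P h) 1 < e' / M'"
      using ev[of "e'/M'"] e' M'pos unfolding eventually_at_right_field by auto
    show "\<exists>d>0. \<forall>t\<in>{0..}. dist t s < d \<longrightarrow> dist (P t) (P s) < e'"
    proof (intro exI[of _ "min b 1"] conjI ballI impI)
      show "0 < min b 1" using b by simp
    next
      fix t :: real assume t: "t \<in> {0..}" and d: "dist t s < min b 1"
      consider "t = s" | "t > s" | "t < s" by linarith
      then show "dist (P t) (P s) < e'"
      proof cases
        case 1 then show ?thesis using e' by simp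
      next
        case 2
        have "P t = P s * P (t - s)" using Padd[of s "t - s"] s 2 by simp
        then have "dist (P t) (P s) = norm (P s * (P (t - s) - 1))"
          by (simp add: dist_norm algebra_simps)
        also have "\<dots> \<le> norm (P s) * norm (P (t - s) - 1)" by (rule norm_mult_ineq)
        also have "\<dots> \<le> M' * norm (P (t - s) - 1)"
          using M'[of s] s by (intro mult_right_mono) auto
        also have "\<dots> < M' * (e' / M')"
          using b(2)[of "t - s"] 2 d M'pos by (intro mult_strict_left_mono) (auto simp: dist_norm)
        also have "\<dots> = e'" using M'pos by simp
        finally show ?thesis .
      next
        case 3
        have "P s = P t * P (s - t)" using Padd[of t "s - t"] t 3 by simp
        then have "dist (P t) (P s) = norm (P t * (P (s - t) - 1))"
          by (simp add: dist_norm algebra_simps norm_minus_commute)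
        also have "\<dots> \<le> norm (P t) * norm (P (s - t) - 1)" by (rule norm_mult_ineq)
        also have "\<dots> \<le> M' * norm (P (s - t) - 1)"
          using M'[of t] t 3 by (intro mult_right_mono) auto
        also have "\<dots> < M' * (e' / M')"
          using b(2)[of "s - t"] 3 d M'pos by (intro mult_strict_left_mono) (auto simp: dist_norm)
        also have "\<dots> = e'" using M'pos by simp
        finally show ?thesis .
      qed
    qed
  qed
qed


lemma neumann_inverse:
  fixes y :: "'a::{real_normed_algebra_1,banach}"
  assumes "norm (1 - y) < 1"
  shows "\<exists>w. y * w = 1"
proof -
  define z where "z = 1 - y"
  have z: "norm z < 1" using assms by (simp add: z_def)
  have sm: "summable (\<lambda>n. z ^ n)"
    by (rule summable_comparison_test[OF _ summable_geometric[of "norm z"]])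
       (use z in \<open>auto simp: norm_power_ineq\<close>)
  have "(\<lambda>n. z ^ n - z ^ Suc n) sums (z ^ 0 - 0)"
    by (rule telescope_sums'[OF LIMSEQ_power_zero[OF z]])
  then have "(\<lambda>n. y * z ^ n) sums 1" by (simp add: z_def algebra_simps)
  moreover have "(\<lambda>n. y * z ^ n) sums (y * suminf (\<lambda>n. z ^ n))"
    using sm summable_sums sums_mult by blast
  ultimately have "y * suminf (\<lambda>n. z ^ n) = 1" using sums_unique2 by blast
  then show ?thesis by blast
qed

lemma sg_deriv:
  fixes P :: "real \<Rightarrow> 'a::{real_normed_algebra_1,banach}"
  assumes P0: "P 0 = 1" and Padd: "\<And>s t. 0 \<le> s \<Longrightarrow> 0 \<le> t \<Longrightarrow> P (s + t) = P s * P t"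
    and Plim: "(P \<longlongrightarrow> 1) (at_right 0)"
  shows "\<exists>H. \<forall>s\<ge>0. (P has_vector_derivative P s * H) (at s within {0..})"
proof -
  have cont: "continuous_on {0..} P" by (rule sg_cont[OF P0 Padd Plim])
  define Q where "Q t = P (max 0 t)" for t
  have QP: "Q t = P t" if "t \<ge> 0" for t using that by (simp add: Q_def)
  have contQ: "continuous_on UNIV Q" unfolding Q_def
    by (rule continuous_on_compose2[OF cont]) (auto intro!: continuous_intros)
  have intQ: "Q integrable_on {a..b}" for a b
    by (rule integrable_continuous_real) (rule continuous_on_subset[OF contQ], auto)
  define V where "V u = integral {-1..u} Q" for u
  have derV: "(V has_vector_derivative Q x) (at x)" if "x \<ge> 0" for x
  proof -
    have "(V has_vector_derivative Q x) (at x within {-1..x+1})"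
      unfolding V_def using that
      by (intro integral_has_vector_derivative continuous_on_subset[OF contQ]) auto
    then have "(V has_vector_derivative Q x) (at x within {-1<..<x+1})"
      by (rule has_vector_derivative_within_subset) auto
    then show ?thesis using that by (subst (asm) has_vector_derivative_within_open) auto
  qed
  have Vdiff: "V (s + t) - V s = integral {s..s+t} Q" if "s \<ge> 0" "t \<ge> 0" for s t
    using Henstock_Kurzweil_Integration.integral_combine[where a="-1" and c=s and b="s+t" and f=Q] that intQ unfolding V_def by (simp add: algebra_simps)
  have shift: "P s * integral {0..t} Q = V (s + t) - V s" if "s \<ge> 0" "t \<ge> 0" for s t
  proof -
    have "P s * integral {0..t} Q = integral {0..t} ((*) (P s) \<circ> Q)"
      by (rule integral_linear[OF intQ bounded_linear_mult_right, symmetric])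
    also have "\<dots> = integral {0..t} (Q \<circ> (+) s)"
      by (rule integral_cong) (use that in \<open>auto simp: QP Padd\<close>)
    also have "\<dots> = integral {0+s..t+s} Q" by (rule integral_shift_Icc_real)
    finally show ?thesis using Vdiff[OF that] by (simp add: add.commute)
  qed
  have ev: "\<forall>\<^sub>F h in at_right 0. dist (P h) 1 < 1/2"
    using Plim tendsto_iff[of P 1 "at_right 0"] by (metis divide_pos_pos zero_less_numeral zero_less_one)
  obtain b where b: "b > 0" "\<And>h. 0 < h \<Longrightarrow> h < b \<Longrightarrow> dist (P h) 1 < 1/2"
    using ev unfolding eventually_at_right_field by auto
  define e where "e = b / 2"
  have e: "e > 0" using b by (simp add: e_def)
  have small: "norm (Q h - 1) \<le> 1/2" if "h \<in> {0..e}" for h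
  proof (cases "h = 0")
    case True then show ?thesis by (simp add: QP P0)
  next
    case False
    then show ?thesis using b(2)[of h] that by (auto simp: e_def QP dist_norm)
  qed
  define I where "I = integral {0..e} Q"
  have hi: "((\<lambda>h. Q h - 1) has_integral (I - e *\<^sub>R 1)) {0..e}"
    unfolding I_def using has_integral_diff[OF integrable_integral[OF intQ] has_integral_const_real[of 1 0 e]] e
    by simp
  have "norm (I - e *\<^sub>R 1) \<le> 1/2 * Henstock_Kurzweil_Integration.content {0..e}"
    using has_integral_bound_real[where S="{}" and B="1/2", OF _ _ hi] small by auto
  then have "norm (I - e *\<^sub>R 1) \<le> e / 2" using e by simp
  then have "norm (1 - (1/e) *\<^sub>R I) \<le> 1/2"
  proof -
    have "1 - (1/e) *\<^sub>R I = - ((1/e) *\<^sub>R (I - e *\<^sub>R 1))" using e by (simp add: algebra_simps)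
    then have "norm (1 - (1/e) *\<^sub>R I) = (1/e) * norm (I - e *\<^sub>R 1)" using e by simp
    also have "\<dots> \<le> (1/e) * (e/2)"
      using \<open>norm (I - e *\<^sub>R 1) \<le> e / 2\<close> e by (intro mult_left_mono) auto
    finally show ?thesis using e by simp
  qed
  then obtain w where w: "((1/e) *\<^sub>R I) * w = 1" using neumann_inverse[of "(1/e) *\<^sub>R I"] by force
  define W where "W = (1/e) *\<^sub>R w"
  have IW: "I * W = 1" using w by (simp add: W_def)
  define H where "H = (P e - 1) * W"
  have Prep: "P s = (V (s + e) - V s) * W" if "s \<ge> 0" for s
  proof -
    have "P s = P s * (I * W)" by (simp add: IW)
    also have "\<dots> = (P s * I) * W" by (simp add: mult.assoc)
    finally show ?thesis using shift[OF that] e unfolding I_def by simp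
  qed
  show ?thesis
  proof (intro exI allI impI)
    fix s :: real assume s: "s \<ge> 0"
    have d1: "((\<lambda>u. V (u + e)) has_vector_derivative Q (s + e)) (at s)"
    proof -
      have "((V \<circ> (\<lambda>u. u + e)) has_vector_derivative 1 *\<^sub>R Q (s + e)) (at s)"
        by (rule vector_diff_chain_at) (auto intro!: derivative_eq_intros derV simp: s e less_imp_le)
      then show ?thesis by (simp add: o_def)
    qed
    have "((\<lambda>u. (V (u + e) - V u) * W) has_vector_derivative (Q (s + e) - Q s) * W) (at s)"
      by (intro has_vector_derivative_mult_left has_vector_derivative_diff d1 derV s)
    then have "((\<lambda>u. (V (u + e) - V u) * W) has_vector_derivative (Q (s + e) - Q s) * W) (at s within {0..})"
      by (rule has_vector_derivative_at_within)
    moreover have "(Q (s + e) - Q s) * W = P s * H"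
    proof -
      have "Q (s + e) = P s * P e" using s e by (simp add: QP Padd)
      then show ?thesis using s by (simp add: QP H_def algebra_simps)
    qed
    ultimately have "((\<lambda>u. (V (u + e) - V u) * W) has_vector_derivative P s * H) (at s within {0..})"
      by simp
    then show "(P has_vector_derivative P s * H) (at s within {0..})"
      by (rule has_vector_derivative_transform_within[where d=1]) (use s Prep in auto)
  qed
qed



definition cv :: "('g::ab_group_add \<Rightarrow> real) \<Rightarrow> ('g \<Rightarrow> real) \<Rightarrow> 'g \<Rightarrow> real" where
  "cv u v = (\<lambda>x. \<Sum>\<^sub>\<infinity>\<xi>. u \<xi> * v (x - \<xi>))"

definition dl :: "'g::ab_group_add \<Rightarrow> real" where
  "dl x = (if x = 0 then 1 else 0)"

lemma abs_summable_real: "(u :: 'a \<Rightarrow> real) summable_on A \<Longrightarrow> (\<lambda>x. \<bar>u x\<bar>) summable_on A"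
  using summable_on_iff_abs_summable_on_real[of u A] by simp

lemma summable_of_abs_real: "(\<lambda>x. \<bar>u x\<bar>) summable_on A \<Longrightarrow> (u :: 'a \<Rightarrow> real) summable_on A"
  using summable_on_iff_abs_summable_on_real[of u A] by simp

lemma prod_summable:
  fixes u v :: "'a \<Rightarrow> real"
  assumes u: "u summable_on UNIV" and v: "v summable_on UNIV"
  shows "(\<lambda>(a, b). u a * v b) summable_on UNIV"
proof -
  have "(\<lambda>(a, b). \<bar>u a\<bar> * \<bar>v b\<bar>) summable_on Sigma UNIV (\<lambda>_. UNIV)"
  proof (rule summable_on_SigmaI[where g="\<lambda>a. \<bar>u a\<bar> * (\<Sum>\<^sub>\<infinity>b. \<bar>v b\<bar>)"])
    fix a :: 'a
    show "((\<lambda>b. case (a, b) of (a, b) \<Rightarrow> \<bar>u a\<bar> * \<bar>v b\<bar>) has_sum \<bar>u a\<bar> * (\<Sum>\<^sub>\<infinity>b. \<bar>v b\<bar>)) UNIV"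
      using has_sum_cmult_right[OF has_sum_infsum[OF abs_summable_real[OF v]], of "\<bar>u a\<bar>"] by simp
  next
    show "(\<lambda>a. \<bar>u a\<bar> * (\<Sum>\<^sub>\<infinity>b. \<bar>v b\<bar>)) summable_on UNIV"
      by (rule summable_on_cmult_left[OF abs_summable_real[OF u]])
  qed auto
  then have "(\<lambda>p. \<bar>(case p of (a, b) \<Rightarrow> u a * v b)\<bar>) summable_on UNIV"
    by (simp add: case_prod_unfold abs_mult)
  then show ?thesis by (rule summable_of_abs_real)
qed

lemma bij_conv: "bij_betw (\<lambda>(x, \<xi>). (\<xi>, x - \<xi>)) UNIV (UNIV :: ('g::ab_group_add \<times> 'g) set)"
  by (rule bij_betwI[where g="\<lambda>(a, b). (a + b, a)"]) auto

lemma conv_pair_summable: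
  fixes u v :: "'g::ab_group_add \<Rightarrow> real"
  assumes u: "u summable_on UNIV" and v: "v summable_on UNIV"
  shows "(\<lambda>(x, \<xi>). u \<xi> * v (x - \<xi>)) summable_on UNIV"
proof -
  have "(\<lambda>p. (\<lambda>(a, b). u a * v b) ((\<lambda>(x, \<xi>). (\<xi>, x - \<xi>)) p)) summable_on UNIV"
    using summable_on_reindex_bij_betw[OF bij_conv] prod_summable[OF u v] by blast
  then show ?thesis by (simp add: case_prod_unfold)
qed

lemma conv_section:
  fixes u v :: "'g::ab_group_add \<Rightarrow> real"
  assumes u: "u summable_on UNIV" and v: "v summable_on UNIV"
  shows "(\<lambda>\<xi>. u \<xi> * v (x - \<xi>)) summable_on UNIV"
  using summable_on_SigmaD1[where f="\<lambda>x \<xi>. u \<xi> * v (x - \<xi>)" and A=UNIV and B="\<lambda>_. UNIV"]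
    conv_pair_summable[OF u v] by auto

lemma conv_summable:
  fixes u v :: "'g::ab_group_add \<Rightarrow> real"
  assumes u: "u summable_on UNIV" and v: "v summable_on UNIV"
  shows "cv u v summable_on UNIV"
  unfolding cv_def
  using summable_on_Sigma_banach[where f="\<lambda>x \<xi>. u \<xi> * v (x - \<xi>)" and A=UNIV and B="\<lambda>_. UNIV"]
    conv_pair_summable[OF u v] by auto

lemma conv_norm:
  fixes u v :: "'g::ab_group_add \<Rightarrow> real"
  assumes u: "u summable_on UNIV" and v: "v summable_on UNIV"
  shows "(\<Sum>\<^sub>\<infinity>x. \<bar>cv u v x\<bar>) \<le> (\<Sum>\<^sub>\<infinity>x. \<bar>u x\<bar>) * (\<Sum>\<^sub>\<infinity>x. \<bar>v x\<bar>)"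
proof -
  have au: "(\<lambda>x. \<bar>u x\<bar>) summable_on UNIV" and av: "(\<lambda>x. \<bar>v x\<bar>) summable_on UNIV"
    using u v by (auto intro: abs_summable_real)
  have "(\<Sum>\<^sub>\<infinity>x. \<bar>cv u v x\<bar>) \<le> (\<Sum>\<^sub>\<infinity>x. cv (\<lambda>x. \<bar>u x\<bar>) (\<lambda>x. \<bar>v x\<bar>) x)"
  proof (rule infsum_mono)
    show "(\<lambda>x. \<bar>cv u v x\<bar>) summable_on UNIV" by (rule abs_summable_real[OF conv_summable[OF u v]])
    show "cv (\<lambda>x. \<bar>u x\<bar>) (\<lambda>x. \<bar>v x\<bar>) summable_on UNIV" by (rule conv_summable[OF au av])
    fix x
    have "norm (cv u v x) \<le> (\<Sum>\<^sub>\<infinity>\<xi>. norm (u \<xi> * v (x - \<xi>)))"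
      unfolding cv_def by (rule norm_infsum_bound) (use abs_summable_real[OF conv_section[OF u v]] in simp)
    then show "\<bar>cv u v x\<bar> \<le> cv (\<lambda>x. \<bar>u x\<bar>) (\<lambda>x. \<bar>v x\<bar>) x"
      by (simp add: cv_def abs_mult)
  qed
  also have "\<dots> = (\<Sum>\<^sub>\<infinity>p. (\<lambda>(x, \<xi>). \<bar>u \<xi>\<bar> * \<bar>v (x - \<xi>)\<bar>) p)"
    unfolding cv_def
    using infsum_Sigma_banach[where f="\<lambda>(x, \<xi>). \<bar>u \<xi>\<bar> * \<bar>v (x - \<xi>)\<bar>" and A=UNIV and B="\<lambda>_. UNIV"]
      conv_pair_summable[OF au av] by simp
  also have "\<dots> = (\<Sum>\<^sub>\<infinity>p. (\<lambda>(a, b). \<bar>u a\<bar> * \<bar>v b\<bar>) p)"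
    using infsum_reindex_bij_betw[OF bij_conv, where f="\<lambda>(a, b). \<bar>u a\<bar> * \<bar>v b\<bar>"]
    by (simp add: case_prod_unfold)
  also have "\<dots> = (\<Sum>\<^sub>\<infinity>a. \<Sum>\<^sub>\<infinity>b. \<bar>u a\<bar> * \<bar>v b\<bar>)"
    using infsum_Sigma_banach[where f="\<lambda>(a, b). \<bar>u a\<bar> * \<bar>v b\<bar>" and A=UNIV and B="\<lambda>_. UNIV"]
      prod_summable[OF au av] by simp
  also have "\<dots> = (\<Sum>\<^sub>\<infinity>x. \<bar>u x\<bar>) * (\<Sum>\<^sub>\<infinity>x. \<bar>v x\<bar>)"
    by (simp add: infsum_cmult_right' infsum_cmult_left')
  finally show ?thesis .
qed

lemma conv_comm:
  fixes u v :: "'g::ab_group_add \<Rightarrow> real"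
  shows "cv u v = cv v u"
proof
  fix x
  have b: "bij_betw (\<lambda>\<eta>. x - \<eta>) UNIV (UNIV :: 'g set)"
    by (rule bij_betwI[where g="\<lambda>\<eta>. x - \<eta>"]) auto
  show "cv u v x = cv v u x"
    unfolding cv_def
    using infsum_reindex_bij_betw[OF b, where f="\<lambda>\<xi>. u \<xi> * v (x - \<xi>)"]
    by (simp add: mult.commute)
qed

lemma point_le_norm:
  fixes w :: "'a \<Rightarrow> real"
  assumes "w summable_on UNIV"
  shows "\<bar>w y\<bar> \<le> (\<Sum>\<^sub>\<infinity>x. \<bar>w x\<bar>)"
  using finite_sum_le_infsum[OF abs_summable_real[OF assms], of "{y}"] by simp

lemma conv_assoc:
  fixes u v w :: "'g::ab_group_add \<Rightarrow> real"
  assumes u: "u summable_on UNIV" and v: "v summable_on UNIV" and w: "w summable_on UNIV"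
  shows "cv (cv u v) w = cv u (cv v w)"
proof
  fix x
  define B where "B = (\<Sum>\<^sub>\<infinity>x. \<bar>w x\<bar>)"
  have gs: "(\<lambda>p. B * \<bar>(case p of (\<zeta>, \<xi>) \<Rightarrow> u \<xi> * v (\<zeta> - \<xi>))\<bar>) summable_on UNIV"
    by (rule summable_on_cmult_right[OF abs_summable_real[OF conv_pair_summable[OF u v]]])
  have bd: "\<bar>(case p of (\<zeta>, \<xi>) \<Rightarrow> u \<xi> * v (\<zeta> - \<xi>) * w (x - \<zeta>))\<bar>
      \<le> B * \<bar>(case p of (\<zeta>, \<xi>) \<Rightarrow> u \<xi> * v (\<zeta> - \<xi>))\<bar>" for p
  proof -
    obtain \<zeta> \<xi> where p: "p = (\<zeta>, \<xi>)" by fastforce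
    have "\<bar>w (x - \<zeta>)\<bar> \<le> B" unfolding B_def by (rule point_le_norm[OF w])
    then show ?thesis unfolding p by (simp add: abs_mult mult.commute mult_right_mono)
  qed
  have F: "(\<lambda>(\<zeta>, \<xi>). u \<xi> * v (\<zeta> - \<xi>) * w (x - \<zeta>)) summable_on UNIV"
    apply (rule summable_of_abs_real)
    apply (rule summable_on_comparison_test[OF gs])
    using bd by auto
  have "cv (cv u v) w x = (\<Sum>\<^sub>\<infinity>\<zeta>. \<Sum>\<^sub>\<infinity>\<xi>. u \<xi> * v (\<zeta> - \<xi>) * w (x - \<zeta>))"
    unfolding cv_def by (simp add: infsum_cmult_left')
  also have "\<dots> = (\<Sum>\<^sub>\<infinity>\<xi>. \<Sum>\<^sub>\<infinity>\<zeta>. u \<xi> * v (\<zeta> - \<xi>) * w (x - \<zeta>))"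
    by (rule infsum_swap_banach) (use F in simp)
  also have "\<dots> = (\<Sum>\<^sub>\<infinity>\<xi>. u \<xi> * cv v w (x - \<xi>))"
  proof (rule infsum_cong)
    fix \<xi>
    have b: "bij_betw (\<lambda>\<eta>. \<eta> + \<xi>) UNIV (UNIV :: 'g set)"
      by (rule bij_betwI[where g="\<lambda>\<eta>. \<eta> - \<xi>"]) auto
    have "(\<Sum>\<^sub>\<infinity>\<zeta>. u \<xi> * v (\<zeta> - \<xi>) * w (x - \<zeta>)) = u \<xi> * (\<Sum>\<^sub>\<infinity>\<zeta>. v (\<zeta> - \<xi>) * w (x - \<zeta>))"
      by (simp add: infsum_cmult_right' mult.assoc)
    also have "(\<Sum>\<^sub>\<infinity>\<zeta>. v (\<zeta> - \<xi>) * w (x - \<zeta>)) = (\<Sum>\<^sub>\<infinity>\<eta>. v \<eta> * w (x - \<xi> - \<eta>))"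
      using infsum_reindex_bij_betw[OF b, where f="\<lambda>\<zeta>. v (\<zeta> - \<xi>) * w (x - \<zeta>)"]
      by (simp add: algebra_simps)
    finally show "(\<Sum>\<^sub>\<infinity>\<zeta>. u \<xi> * v (\<zeta> - \<xi>) * w (x - \<zeta>)) = u \<xi> * cv v w (x - \<xi>)"
      by (simp add: cv_def)
  qed
  also have "\<dots> = cv u (cv v w) x" by (simp add: cv_def)
  finally show "cv (cv u v) w x = cv u (cv v w) x" .
qed

lemma conv_add_right:
  fixes u v w :: "'g::ab_group_add \<Rightarrow> real"
  assumes u: "u summable_on UNIV" and v: "v summable_on UNIV" and w: "w summable_on UNIV"
  shows "cv u (\<lambda>x. v x + w x) = (\<lambda>x. cv u v x + cv u w x)"
  unfolding cv_def
  using infsum_add[OF conv_section[OF u v] conv_section[OF u w]]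
  by (simp add: distrib_left)

lemma conv_scale_right:
  fixes u v :: "'g::ab_group_add \<Rightarrow> real"
  shows "cv u (\<lambda>x. c * v x) = (\<lambda>x. c * cv u v x)"
  unfolding cv_def
  using infsum_cmult_right' by (simp add: algebra_simps infsum_cmult_right')

lemma conv_dl_left: "cv dl u = u"
proof
  fix x
  show "cv dl u x = u x"
    unfolding cv_def
    by (rule infsumI, rule has_sum_finite_neutralI[where B="{0}"]) (auto simp: dl_def)
qed

lemma dl_summable: "dl summable_on UNIV"
  by (rule has_sum_imp_summable, rule has_sum_finite_neutralI[where B="{0}"]) (auto simp: dl_def)


typedef ('g::ab_group_add) lone = "{u :: 'g \<Rightarrow> real. u summable_on UNIV}"
  morphisms Rep_lone Abs_lone
  by (rule exI[of _ "\<lambda>_. 0"]) simp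

setup_lifting type_definition_lone

instantiation lone :: (ab_group_add) real_vector
begin
lift_definition zero_lone :: "'a lone" is "\<lambda>_. 0" by simp
lift_definition plus_lone :: "'a lone \<Rightarrow> 'a lone \<Rightarrow> 'a lone" is "\<lambda>u v x. u x + v x"
  by (rule summable_on_add)
lift_definition uminus_lone :: "'a lone \<Rightarrow> 'a lone" is "\<lambda>u x. - u x"
  by (simp add: summable_on_uminus)
lift_definition minus_lone :: "'a lone \<Rightarrow> 'a lone \<Rightarrow> 'a lone" is "\<lambda>u v x. u x - v x"
proof -
  fix u v :: "'a \<Rightarrow> real" assume "u summable_on UNIV" "v summable_on UNIV"
  then have "(\<lambda>x. u x + - v x) summable_on UNIV"
    by (intro summable_on_add) (auto simp: summable_on_uminus)
  then show "(\<lambda>x. u x - v x) summable_on UNIV" by simp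
qed
lift_definition scaleR_lone :: "real \<Rightarrow> 'a lone \<Rightarrow> 'a lone" is "\<lambda>c u x. c * u x"
  by (rule summable_on_cmult_right)
instance
  by standard (transfer; auto simp: algebra_simps)+
end

lemma norm_sum_triangle:
  fixes u v :: "'g \<Rightarrow> real"
  assumes u: "u summable_on UNIV" and v: "v summable_on UNIV"
  shows "(\<Sum>\<^sub>\<infinity>x. \<bar>u x + v x\<bar>) \<le> (\<Sum>\<^sub>\<infinity>x. \<bar>u x\<bar>) + (\<Sum>\<^sub>\<infinity>x. \<bar>v x\<bar>)"
proof -
  have "(\<Sum>\<^sub>\<infinity>x. \<bar>u x + v x\<bar>) \<le> (\<Sum>\<^sub>\<infinity>x. \<bar>u x\<bar> + \<bar>v x\<bar>)"
    by (rule infsum_mono) (use u v in \<open>auto intro!: abs_summable_real summable_on_add\<close>)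
  also have "\<dots> = (\<Sum>\<^sub>\<infinity>x. \<bar>u x\<bar>) + (\<Sum>\<^sub>\<infinity>x. \<bar>v x\<bar>)"
    by (rule infsum_add) (use u v in \<open>auto intro!: abs_summable_real\<close>)
  finally show ?thesis .
qed

instantiation lone :: (ab_group_add) real_normed_vector
begin
lift_definition norm_lone :: "'a lone \<Rightarrow> real" is "\<lambda>u. \<Sum>\<^sub>\<infinity>x. \<bar>u x\<bar>" .
definition dist_lone :: "'a lone \<Rightarrow> 'a lone \<Rightarrow> real" where "dist_lone x y = norm (x - y)"
definition sgn_lone :: "'a lone \<Rightarrow> 'a lone" where "sgn_lone x = x /\<^sub>R norm x"
definition uniformity_lone :: "('a lone \<times> 'a lone) filter" where
  "uniformity_lone = (INF e\<in>{0<..}. principal {(x, y). dist x y < e})"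
definition open_lone :: "'a lone set \<Rightarrow> bool" where
  "open_lone U = (\<forall>x\<in>U. \<forall>\<^sub>F (x', y) in uniformity. x' = x \<longrightarrow> y \<in> U)"
instance
proof
  fix x y :: "'a lone" and a :: real
  show "dist x y = norm (x - y)" by (simp add: dist_lone_def)
  show "sgn x = x /\<^sub>R norm x" by (simp add: sgn_lone_def)
  show "(norm x = 0) = (x = 0)"
  proof (transfer)
    fix u :: "'a \<Rightarrow> real" assume u: "u summable_on UNIV"
    show "((\<Sum>\<^sub>\<infinity>x. \<bar>u x\<bar>) = 0) = (u = (\<lambda>_. 0))"
    proof
      assume h: "(\<Sum>\<^sub>\<infinity>x. \<bar>u x\<bar>) = 0"
      show "u = (\<lambda>_. 0)"
      proof
        fix z
        have "\<bar>u z\<bar> = 0"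
          by (rule nonneg_infsum_le_0D[where f="\<lambda>x. \<bar>u x\<bar>" and A=UNIV]) (use h abs_summable_real[OF u] in auto)
        then show "u z = 0" by simp
      qed
    qed simp
  qed
  show "norm (x + y) \<le> norm x + norm y"
    by transfer (rule norm_sum_triangle)
  show "norm (a *\<^sub>R x) = \<bar>a\<bar> * norm x"
    by transfer (simp add: abs_mult infsum_cmult_right')
qed (simp_all add: uniformity_lone_def open_lone_def)
end

instantiation lone :: (ab_group_add) comm_ring_1
begin
lift_definition one_lone :: "'a lone" is dl by (rule dl_summable)
lift_definition times_lone :: "'a lone \<Rightarrow> 'a lone \<Rightarrow> 'a lone" is cv by (rule conv_summable)
instance
proof
  fix a b c :: "'a lone"
  show "a * b * c = a * (b * c)" by transfer (rule conv_assoc)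
  show "a * b = b * a" by transfer (rule conv_comm)
  show "1 * a = a" by transfer (rule conv_dl_left)
  show "(a + b) * c = a * c + b * c"
  proof transfer
    fix u v w :: "'a \<Rightarrow> real"
    assume u: "u summable_on UNIV" and v: "v summable_on UNIV" and w: "w summable_on UNIV"
    show "cv (\<lambda>x. u x + v x) w = (\<lambda>x. cv u w x + cv v w x)"
      using conv_add_right[OF w u v] by (simp add: conv_comm[of w])
  qed
  show "(0::'a lone) \<noteq> 1"
  proof transfer
    show "(\<lambda>_. 0) \<noteq> (dl :: 'a \<Rightarrow> real)"
      by (metis dl_def zero_neq_one)
  qed
qed
end

lemma cv_scale_left: "cv (\<lambda>x. c * u x) v = (\<lambda>x. c * cv u v x)"
  using conv_scale_right[of v c u] by (simp add: conv_comm[of _ v])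

instance lone :: (ab_group_add) real_normed_algebra_1
proof
  fix a b :: "'a lone" and c :: real
  show "c *\<^sub>R a * b = c *\<^sub>R (a * b)" by transfer (rule cv_scale_left)
  show "a * c *\<^sub>R b = c *\<^sub>R (a * b)" by transfer (rule conv_scale_right)
  show "norm (a * b) \<le> norm a * norm b" by transfer (rule conv_norm)
  show "norm (1::'a lone) = 1"
  proof transfer
    show "(\<Sum>\<^sub>\<infinity>x. \<bar>dl x\<bar>) = (1::real)"
      by (rule infsumI, rule has_sum_finite_neutralI[where B="{0}"]) (auto simp: dl_def)
  qed
qed


lemma norm_lone_rep: "norm a = (\<Sum>\<^sub>\<infinity>x. \<bar>Rep_lone a x\<bar>)"
  by (simp add: norm_lone.rep_eq)

lemma Rep_lone_summable: "Rep_lone a summable_on UNIV"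
  using Rep_lone by simp

lemma point_le_norm_lone: "\<bar>Rep_lone a x\<bar> \<le> norm a"
  unfolding norm_lone_rep by (rule point_le_norm[OF Rep_lone_summable])

instance lone :: (ab_group_add) banach
proof
  fix X :: "nat \<Rightarrow> 'a lone"
  assume C: "Cauchy X"
  define R where "R n = Rep_lone (X n)" for n
  have Rdiff: "\<bar>R n x - R m x\<bar> \<le> norm (X n - X m)" for n m x
    using point_le_norm_lone[of "X n - X m" x] by (simp add: R_def minus_lone.rep_eq)
  have CN: "\<exists>N. \<forall>m\<ge>N. \<forall>n\<ge>N. norm (X m - X n) < e" if "e > 0" for e
    using metric_CauchyD[OF C that] by (simp add: dist_norm)
  have pc: "Cauchy (\<lambda>n. R n x)" for x
  proof (rule metric_CauchyI)
    fix e :: real assume "e > 0"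
    then obtain N where N: "\<forall>m\<ge>N. \<forall>n\<ge>N. norm (X m - X n) < e" using CN by blast
    show "\<exists>M. \<forall>m\<ge>M. \<forall>n\<ge>M. dist (R m x) (R n x) < e"
      using N Rdiff by (metis dist_real_def le_less_trans)
  qed
  define u where "u x = lim (\<lambda>n. R n x)" for x
  have ulim: "(\<lambda>n. R n x) \<longlonglongrightarrow> u x" for x
    unfolding u_def using pc Cauchy_convergent_iff convergent_LIMSEQ_iff by blast
  have key: "(\<lambda>x. R n x - u x) summable_on UNIV \<and> (\<Sum>\<^sub>\<infinity>x. \<bar>R n x - u x\<bar>) \<le> e"
    if N: "\<forall>m\<ge>N. \<forall>n\<ge>N. norm (X m - X n) < e" and n: "n \<ge> N" for e N n
  proof -
    have fin: "(\<Sum>x\<in>F. \<bar>R n x - u x\<bar>) \<le> e" if F: "finite F" for F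
    proof -
      have lim: "(\<lambda>m. \<Sum>x\<in>F. \<bar>R n x - R m x\<bar>) \<longlonglongrightarrow> (\<Sum>x\<in>F. \<bar>R n x - u x\<bar>)"
        by (intro tendsto_sum tendsto_rabs tendsto_diff tendsto_const ulim)
      have "(\<Sum>x\<in>F. \<bar>R n x - R m x\<bar>) \<le> e" if m: "m \<ge> N" for m
      proof -
        have "(\<Sum>x\<in>F. \<bar>R n x - R m x\<bar>) \<le> (\<Sum>\<^sub>\<infinity>x. \<bar>R n x - R m x\<bar>)"
          by (rule finite_sum_le_infsum[OF _ F])
             (use Rep_lone_summable[of "X n - X m"] in \<open>auto intro!: abs_summable_real simp: R_def minus_lone.rep_eq\<close>)
        also have "\<dots> = norm (X n - X m)" by (simp add: norm_lone_rep R_def minus_lone.rep_eq)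
        also have "\<dots> < e" using N n m by blast
        finally show ?thesis by simp
      qed
      then show ?thesis using LIMSEQ_le_const2[OF lim] by blast
    qed
    have sm: "(\<lambda>x. \<bar>R n x - u x\<bar>) summable_on UNIV"
      by (rule nonneg_bdd_above_summable_on) (use fin in \<open>auto intro!: bdd_aboveI2\<close>)
    show ?thesis
      using summable_of_abs_real[OF sm] infsum_le_finite_sums[OF sm] fin by auto
  qed
  obtain N1 where N1: "\<forall>m\<ge>N1. \<forall>n\<ge>N1. norm (X m - X n) < 1" using CN[of 1] by auto
  have "(\<lambda>x. R N1 x - (R N1 x - u x)) summable_on UNIV"
  proof -
    have "(\<lambda>x. R N1 x + - (R N1 x - u x)) summable_on UNIV"
    proof (rule summable_on_add)
      show "R N1 summable_on UNIV" using Rep_lone_summable[of "X N1"] by (simp add: R_def)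
      show "(\<lambda>x. - (R N1 x - u x)) summable_on UNIV"
        using key[OF N1 order.refl] by (simp only: summable_on_uminus)
    qed
    then show ?thesis by simp
  qed
  then have us: "u summable_on UNIV" by simp
  define U where "U = Abs_lone u"
  have RU: "Rep_lone U = u" unfolding U_def using us by (simp add: Abs_lone_inverse)
  have "X \<longlonglongrightarrow> U"
  proof (rule LIMSEQ_I)
    fix r :: real assume r: "r > 0"
    then obtain N where N: "\<forall>m\<ge>N. \<forall>n\<ge>N. norm (X m - X n) < r/2" using CN[of "r/2"] by auto
    show "\<exists>no. \<forall>n\<ge>no. norm (X n - U) < r"
    proof (intro exI allI impI)
      fix n assume n: "n \<ge> N"
      have "norm (X n - U) = (\<Sum>\<^sub>\<infinity>x. \<bar>R n x - u x\<bar>)"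
        by (simp add: norm_lone_rep minus_lone.rep_eq RU R_def)
      also have "\<dots> \<le> r/2" using key[OF N n] by blast
      finally show "norm (X n - U) < r" using r by simp
    qed
  qed
  then show "convergent X" by (rule convergentI)
qed


lemma in_l1_iff: "in_l1 u \<longleftrightarrow> u summable_on UNIV"
  unfolding in_l1_def using summable_on_iff_abs_summable_on_real[of u UNIV] by simp

lemma ddelta_dl: "ddelta = dl"
  by (simp add: ddelta_def dl_def fun_eq_iff)

lemma dconv_cv: "dconv = cv"
  by (simp add: dconv_def cv_def fun_eq_iff)

theorem lemmaA3:
  fixes f :: "int ^ 'd::finite \<Rightarrow> real"
    and T :: "int ^ 'd \<Rightarrow> real \<Rightarrow> real"
  assumes "in_l1 f"
    and "pre_scale_space_kernel T"
  shows "\<exists>A :: 'd dsignal \<Rightarrow> 'd dsignal.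
           linear_on_l1 A \<and> shift_invariant_on_l1 A \<and>
           (\<forall>x. \<forall>s\<ge>0.
              ((\<lambda>t. pre_scale_space_rep T f x t) has_real_derivative
                 A (\<lambda>\<xi>. pre_scale_space_rep T f \<xi> s) x) (at s within {0..}))"
proof -
  have fs: "f summable_on UNIV" using assms(1) by (simp add: in_l1_iff)
  have T0: "(\<lambda>x. T x 0) = dl"
    and sg: "\<And>s1 s2. s1 \<ge> 0 \<Longrightarrow> s2 \<ge> 0 \<Longrightarrow> cv (\<lambda>x. T x s1) (\<lambda>x. T x s2) = (\<lambda>x. T x (s1 + s2))"
    and ev: "\<forall>\<^sub>F s in at_right 0. in_l1 (\<lambda>x. T x s - ddelta x)"
    and lim: "((\<lambda>s. l1_norm (\<lambda>x. T x s - ddelta x)) \<longlongrightarrow> 0) (at_right 0)"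
    using assms(2) unfolding pre_scale_space_kernel_def ddelta_dl dconv_cv by auto
  obtain b where b: "b > 0" "\<And>h. 0 < h \<Longrightarrow> h < b \<Longrightarrow> in_l1 (\<lambda>x. T x h - ddelta x)"
    using ev unfolding eventually_at_right_field by auto
  define e where "e = b / 2"
  have e: "e > 0" "e < b" using b by (auto simp: e_def)
  have Tsmall: "(\<lambda>x. T x h) summable_on UNIV" if "0 \<le> h" "h < b" for h
  proof (cases "h = 0")
    case True then show ?thesis using T0 dl_summable by simp
  next
    case False
    then have "(\<lambda>x. T x h - dl x) summable_on UNIV"
      using b(2)[of h] that by (simp add: in_l1_iff ddelta_dl)
    then have "(\<lambda>x. (T x h - dl x) + dl x) summable_on UNIV"
      by (rule summable_on_add[OF _ dl_summable])
    then show ?thesis by simp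
  qed
  have Tind: "\<forall>s. 0 \<le> s \<and> s \<le> real n * e \<longrightarrow> (\<lambda>x. T x s) summable_on UNIV" for n
  proof (induction n)
    case 0 then show ?case using T0 dl_summable by auto
  next
    case (Suc n)
    show ?case
    proof (intro allI impI)
      fix s assume s: "0 \<le> s \<and> s \<le> real (Suc n) * e"
      show "(\<lambda>x. T x s) summable_on UNIV"
      proof (cases "s \<le> e")
        case True then show ?thesis using Tsmall s e by auto
      next
        case False
        have "(\<lambda>x. T x (s - e)) summable_on UNIV"
          using Suc.IH False s by (auto simp: algebra_simps)
        moreover have "(\<lambda>x. T x e) summable_on UNIV" using Tsmall e by auto
        ultimately have "cv (\<lambda>x. T x e) (\<lambda>x. T x (s - e)) summable_on UNIV"
          using conv_summable by blast
        then show ?thesis using sg[of e "s - e"] e False by simp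
      qed
    qed
  qed
  have Ts: "(\<lambda>x. T x s) summable_on UNIV" if "s \<ge> 0" for s
  proof -
    have "s / e \<le> real (nat \<lceil>s / e\<rceil>)" by (rule real_nat_ceiling_ge)
    then have "s \<le> real (nat \<lceil>s / e\<rceil>) * e" using e by (simp add: field_simps)
    then show ?thesis using Tind that by blast
  qed
  define P where "P s = Abs_lone (\<lambda>x. T x s)" for s
  have RP: "Rep_lone (P s) = (\<lambda>x. T x s)" if "s \<ge> 0" for s
    unfolding P_def using Ts[OF that] by (simp add: Abs_lone_inverse)
  have P0: "P 0 = 1"
    by (rule Rep_lone_inject[THEN iffD1]) (simp add: RP T0 one_lone.rep_eq)
  have Padd: "P (s + t) = P s * P t" if "0 \<le> s" "0 \<le> t" for s t
    by (rule Rep_lone_inject[THEN iffD1]) (use that in \<open>simp add: RP times_lone.rep_eq sg\<close>)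
  have Plim: "(P \<longlongrightarrow> 1) (at_right 0)"
  proof -
    have "((\<lambda>h. norm (P h - 1)) \<longlongrightarrow> 0) (at_right 0)"
    proof (rule tendsto_cong[THEN iffD1, OF _ lim])
      show "\<forall>\<^sub>F h in at_right 0. l1_norm (\<lambda>x. T x h - ddelta x) = norm (P h - 1)"
        using eventually_at_right_less[of "0::real"]
        by eventually_elim (simp add: norm_lone_rep minus_lone.rep_eq RP one_lone.rep_eq l1_norm_def ddelta_dl)
    qed
    then have "((\<lambda>h. P h - 1) \<longlongrightarrow> 0) (at_right 0)" by (simp only: tendsto_norm_zero_iff)
    then show ?thesis by (simp only: Lim_null[symmetric])
  qed
  obtain H where H: "\<And>s. s \<ge> 0 \<Longrightarrow> (P has_vector_derivative P s * H) (at s within {0..})"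
    using sg_deriv[OF P0 Padd Plim] by blast
  define h where "h = Rep_lone H"
  have hs: "h summable_on UNIV" unfolding h_def by (rule Rep_lone_summable)
  define F where "F = Abs_lone f"
  have RF: "Rep_lone F = f" unfolding F_def using fs by (simp add: Abs_lone_inverse)
  have Lrep: "(\<lambda>\<xi>. pre_scale_space_rep T f \<xi> s) = Rep_lone (P s * F)" if "s \<ge> 0" for s
    using that by (simp add: times_lone.rep_eq RP RF pre_scale_space_rep_def cv_def fun_eq_iff)
  show ?thesis
  proof (intro exI[of _ "cv h"] conjI allI impI)
    show "linear_on_l1 (cv h)"
      unfolding linear_on_l1_def
    proof (intro allI impI)
      fix u v :: "'d dsignal" and a c :: real
      assume "in_l1 u" "in_l1 v"
      then have us: "u summable_on UNIV" and vs: "v summable_on UNIV" by (auto simp: in_l1_iff)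
      show "cv h (\<lambda>x. a * u x + c * v x) = (\<lambda>x. a * cv h u x + c * cv h v x)"
        using conv_add_right[OF hs summable_on_cmult_right[OF us] summable_on_cmult_right[OF vs]]
        by (simp add: conv_scale_right)
    qed
    show "shift_invariant_on_l1 (cv h)"
      unfolding shift_invariant_on_l1_def
      by (simp add: cv_def algebra_simps)
  next
    fix x :: "int ^ 'd" and s :: real assume s: "s \<ge> 0"
    define \<phi> where "\<phi> u = Rep_lone (u * F) x" for u
    have blev: "bounded_linear (\<lambda>u :: (int ^ 'd) lone. Rep_lone u x)"
    proof (rule bounded_linear_intro[where K=1])
      fix u v :: "(int ^ 'd) lone" and r :: real
      show "Rep_lone (u + v) x = Rep_lone u x + Rep_lone v x" by (simp add: plus_lone.rep_eq)
      show "Rep_lone (r *\<^sub>R u) x = r *\<^sub>R Rep_lone u x" by (simp add: scaleR_lone.rep_eq)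
      show "norm (Rep_lone u x) \<le> norm u * 1" using point_le_norm_lone[of u x] by simp
    qed
    have bl: "bounded_linear \<phi>"
      unfolding \<phi>_def using bounded_linear_compose[OF blev bounded_linear_mult_left[of F]] by (simp add: o_def)
    have d: "((\<lambda>t. \<phi> (P t)) has_vector_derivative \<phi> (P s * H)) (at s within {0..})"
      by (rule bounded_linear.has_vector_derivative[OF bl H[OF s]])
    have val: "\<phi> (P s * H) = cv h (\<lambda>\<xi>. pre_scale_space_rep T f \<xi> s) x"
    proof -
      have "\<phi> (P s * H) = Rep_lone (H * (P s * F)) x" by (simp add: \<phi>_def ac_simps)
      also have "\<dots> = cv h (Rep_lone (P s * F)) x" by (simp add: times_lone.rep_eq h_def)
      finally show ?thesis using Lrep[OF s] by simp
    qed
    have "((\<lambda>t. pre_scale_space_rep T f x t) has_vector_derivative \<phi> (P s * H)) (at s within {0..})"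
    proof (rule has_vector_derivative_transform_within[OF d zero_less_one])
      show "s \<in> {0..}" using s by simp
      fix t :: real assume "t \<in> {0..}"
      then show "\<phi> (P t) = pre_scale_space_rep T f x t"
        using Lrep[of t] by (simp add: \<phi>_def fun_eq_iff)
    qed
    then show "((\<lambda>t. pre_scale_space_rep T f x t) has_real_derivative
                 cv h (\<lambda>\<xi>. pre_scale_space_rep T f \<xi> s) x) (at s within {0..})"
      using val by (simp add: has_real_derivative_iff_has_vector_derivative)
  qed
qed

end
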